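(* If $x\in\mathrm{Sort}_n(132,321)$, then $x$ avoids the bivincular pattern $132^{\star}$.
   Context: An occurrence of the bivincular pattern $132^{\star}$ in $x=x_1\cdots x_n$ is a triple of indices $a<b$, $b+1\le n$ with $x_a<x_{b+1}$ and $x_b=x_{b+1}+1$ (so $x_ax_bx_{b+1}$ is an occurrence of $132$ whose last two entries are adjacent in position and consecutive in value). A permutation contains a classical pattern $p$ if it has a subsequence order-isomorphic to $p$. For a set $T$ of patterns, the map $s_T$ is defined as follows: the entries of the input permutation are read from left to right, with an initially empty stack. At each step, if the input is nonempty and pushing the next input entry onto the stack produces a stack whose contents, read from top to bottom, avoid every pattern in $T$, that entry is pushed; otherwise the top entry of the stack is popped and appended to the output. When the input is exhausted, the remaining stack entries are popped one at a time to the output. Write $s_{\sigma,\tau}=s_{\{\sigma,\tau\}}$ and $s=s_{\{21\}}$ (West's stack-sorting map). $\mathrm{Sort}_n(\sigma,\tau)$ is the set of $x\in S_n$ with $s(s_{\sigma,\tau}(x))=12\cdots n$. *)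

theory Defs
  imports "HOL-Combinatorics.Multiset_Permutations" "HOL-Library.Sublist"
begin

text \<open>Permutations of length n are lists over {1..n} (one-line notation, 0-indexed positions).\<close>

definition order_iso :: "nat list \<Rightarrow> nat list \<Rightarrow> bool" where
  "order_iso xs ys \<longleftrightarrow> length xs = length ys \<and>
     (\<forall>i < length xs. \<forall>j < length xs. (xs ! i < xs ! j) = (ys ! i < ys ! j))"

definition contains :: "nat list \<Rightarrow> nat list \<Rightarrow> bool" where
  "contains x p \<longleftrightarrow> (\<exists>ys. subseq ys x \<and> order_iso ys p)"

definition avoids_all :: "nat list set \<Rightarrow> nat list \<Rightarrow> bool" where
  "avoids_all T x \<longleftrightarrow> (\<forall>p\<in>T. \<not> contains x p)"

text \<open>The stack is a list whose head is the top,
  so the list itself is the stack contents read from top to bottom.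
  Arguments: pattern set, remaining input, current stack; result: output.
  (If a push is forbidden while the stack is empty, the entry is pushed anyway;
  this case never occurs for patterns of length at least 2.)\<close>
fun stack_run :: "nat list set \<Rightarrow> nat list \<Rightarrow> nat list \<Rightarrow> nat list" where
  "stack_run T [] st = st"
| "stack_run T (a # inp) st =
     (if avoids_all T (a # st) then stack_run T inp (a # st)
      else (case st of [] \<Rightarrow> stack_run T inp [a]
                     | b # st' \<Rightarrow> b # stack_run T (a # inp) st'))"

definition s_T :: "nat list set \<Rightarrow> nat list \<Rightarrow> nat list" where
  "s_T T x = stack_run T x []"

definition s_pair :: "nat list \<Rightarrow> nat list \<Rightarrow> nat list \<Rightarrow> nat list" where
  "s_pair \<sigma> \<tau> = s_T {\<sigma>, \<tau>}"

definition west_s :: "nat list \<Rightarrow> nat list" where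
  "west_s = s_T {[2, 1]}"

definition Sort :: "nat \<Rightarrow> nat list \<Rightarrow> nat list \<Rightarrow> nat list set" where
  "Sort n \<sigma> \<tau> = {x \<in> permutations_of_set {1..n}. west_s (s_pair \<sigma> \<tau> x) = [1..<n+1]}"

definition contains_132star :: "nat list \<Rightarrow> bool" where
  "contains_132star x \<longleftrightarrow> (\<exists>a b. a < b \<and> b + 1 < length x \<and>
      x ! a < x ! (b + 1) \<and> x ! b = x ! (b + 1) + 1)"

end

theory Submission
  imports Defs
begin

lemma subseq_Cons_iff:
  "subseq (y#ys) (a#w) \<longleftrightarrow> subseq (y#ys) w \<or> (y = a \<and> subseq ys w)"
  by (cases "y = a") (auto intro: subseq_Cons')

lemma all_less_3: "(\<forall>i<(3::nat). P i) = (P 0 \<and> P 1 \<and> P 2)"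
  by (auto simp: less_Suc_eq numeral_3_eq_3 numeral_2_eq_2)
lemma all_less_2: "(\<forall>i<(2::nat). P i) = (P 0 \<and> P 1)"
  by (auto simp: less_Suc_eq numeral_2_eq_2)

lemma len3: "length ys = 3 \<Longrightarrow> \<exists>a b c. ys = [a,b,c]"
  by (cases ys; cases "tl ys"; cases "tl (tl ys)") (auto simp: numeral_3_eq_3)

definition has132 where "has132 w \<longleftrightarrow> (\<exists>y1 y2 y3. subseq [y1,y2,y3] w \<and> y1 < y3 \<and> y3 < y2)"
definition has321 where "has321 w \<longleftrightarrow> (\<exists>y1 y2 y3. subseq [y1,y2,y3] w \<and> y2 < y1 \<and> y3 < y2)"

lemma contains_132: "contains w [1,3,2] \<longleftrightarrow> has132 w"
proof
  assume "contains w [1,3,2]"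
  then obtain ys where s: "subseq ys w" and o: "order_iso ys [1,3,2]" unfolding contains_def by blast
  from o have "length ys = 3" unfolding order_iso_def by simp
  then obtain a b c where ys: "ys = [a,b,c]" using len3 by blast
  have h: "\<And>i j. i<3 \<Longrightarrow> j<3 \<Longrightarrow> ([a,b,c]!i < [a,b,c]!j) = ([1,3,2::nat]!i < [1,3,2]!j)"
    using o unfolding ys order_iso_def by auto
  from h[of 0 1] h[of 0 2] h[of 2 1] h[of 1 0] h[of 2 0] h[of 1 2] have "a < c \<and> c < b" by simp
  then show "has132 w" using s ys unfolding has132_def by blast
next
  assume "has132 w"
  then obtain a b c where "subseq [a,b,c] w" "a < c" "c < b" unfolding has132_def by blast
  moreover have "order_iso [a,b,c] [1,3,2]" using \<open>a<c\<close> \<open>c<b\<close> by (auto simp: order_iso_def less_Suc_eq)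
  ultimately show "contains w [1,3,2]" unfolding contains_def by blast
qed

lemma contains_321: "contains w [3,2,1] \<longleftrightarrow> has321 w"
proof
  assume "contains w [3,2,1]"
  then obtain ys where s: "subseq ys w" and o: "order_iso ys [3,2,1]" unfolding contains_def by blast
  from o have "length ys = 3" unfolding order_iso_def by simp
  then obtain a b c where ys: "ys = [a,b,c]" using len3 by blast
  have h: "\<And>i j. i<3 \<Longrightarrow> j<3 \<Longrightarrow> ([a,b,c]!i < [a,b,c]!j) = ([3,2,1::nat]!i < [3,2,1]!j)"
    using o unfolding ys order_iso_def by auto
  from h[of 0 1] h[of 0 2] h[of 2 1] h[of 1 0] h[of 2 0] h[of 1 2] have "b < a \<and> c < b" by simp
  then show "has321 w" using s ys unfolding has321_def by blast
next
  assume "has321 w"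
  then obtain a b c where "subseq [a,b,c] w" "b < a" "c < b" unfolding has321_def by blast
  moreover have "order_iso [a,b,c] [3,2,1]" using \<open>b<a\<close> \<open>c<b\<close> by (auto simp: order_iso_def less_Suc_eq)
  ultimately show "contains w [3,2,1]" unfolding contains_def by blast
qed

abbreviation "S \<equiv> {[1,3,2],[3,2,1::nat]}"

lemma avoidsS: "avoids_all S w \<longleftrightarrow> \<not> has132 w \<and> \<not> has321 w"
  unfolding avoids_all_def using contains_132 contains_321 by auto

lemma west_blocked: "c \<in> set st \<Longrightarrow> c < e \<Longrightarrow> \<not> avoids_all {[2,1]} (e # st)"
proof -
  assume "c \<in> set st" "c < e"
  have "subseq [e,c] (e#st)" using \<open>c \<in> set st\<close> by (simp add: subseq_singleton_left)
  moreover have "order_iso [e,c] [2,1]" using \<open>c<e\<close> by (auto simp: order_iso_def less_Suc_eq)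
  ultimately show ?thesis unfolding avoids_all_def contains_def by blast
qed

lemma subseq3_cases:
  assumes "subseq [y1,y2,y3] (a#w)"
  obtains "subseq [y1,y2,y3] w" | "y1 = a" "subseq [y2,y3] w"
proof -
  from assms have "subseq [y1,y2,y3] w \<or> (y1 = a \<and> subseq [y2,y3] w)" by (simp only: subseq_Cons_iff)
  then show ?thesis using that by blast
qed

lemma subseq2_cases:
  assumes "subseq [y2,y3] (a#w)"
  obtains "subseq [y2,y3] w" | "y2 = a" "y3 \<in> set w"
proof -
  from assms have "subseq [y2,y3] w \<or> (y2 = a \<and> subseq [y3] w)" by (simp only: subseq_Cons_iff)
  then show ?thesis using that by (auto simp: subseq_singleton_left)
qed

lemma K1:
  assumes "avoids_all S (m # R)" "\<forall>z\<in>set R. m < z" "m < a"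
  shows "avoids_all S (a # m # R)"
proof -
  have n1: "\<not> has132 (m#R)" and n2: "\<not> has321 (m#R)" using assms(1) avoidsS by auto
  have "\<not> has132 (a#m#R)"
  proof
    assume "has132 (a#m#R)"
    then obtain y1 y2 y3 where s: "subseq [y1,y2,y3] (a#m#R)" "y1<y3" "y3<y2" unfolding has132_def by blast
    from s(1) show False
    proof (cases rule: subseq3_cases)
      case 1 then show False using n1 s unfolding has132_def by blast
    next
      case 2
      note o = this
      from o(2) show False
      proof (cases rule: subseq2_cases)
        case 1
        then have "subseq [m,y2,y3] (m#R)" by simp
        moreover have "m < y3" using o s assms by simp
        ultimately show False using n1 s unfolding has132_def by blast
      next
        case 2
        then have "m < y3" using assms(2) by blast
        then show False using o s 2 by simp
      qed
    qed
  qed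
  moreover have "\<not> has321 (a#m#R)"
  proof
    assume "has321 (a#m#R)"
    then obtain y1 y2 y3 where s: "subseq [y1,y2,y3] (a#m#R)" "y2<y1" "y3<y2" unfolding has321_def by blast
    from s(1) show False
    proof (cases rule: subseq3_cases)
      case 1 then show False using n2 s unfolding has321_def by blast
    next
      case 2
      note o = this
      from o(2) show False
      proof (cases rule: subseq2_cases)
        case 1
        then have "subseq [m,y2,y3] (m#R)" by simp
        moreover have "y3 \<in> set R" using 1 by (meson subseq_singleton_left subseq_Cons')
        then have "m < y3" using assms(2) by blast
        ultimately show False using n1 s unfolding has132_def by blast
      next
        case 2
        then have "m < y3" using assms(2) by blast
        then show False using o s 2 by simp
      qed
    qed
  qed
  ultimately show ?thesis using avoidsS by blast
qed

lemma K2: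
  assumes "avoids_all S (Suc c # R)" "Suc c \<notin> set R"
  shows "avoids_all S (c # Suc c # R)"
proof -
  have n1: "\<not> has132 (Suc c#R)" and n2: "\<not> has321 (Suc c#R)" using assms(1) avoidsS by auto
  have "\<not> has132 (c#Suc c#R)"
  proof
    assume "has132 (c#Suc c#R)"
    then obtain y1 y2 y3 where s: "subseq [y1,y2,y3] (c#Suc c#R)" "y1<y3" "y3<y2" unfolding has132_def by blast
    from s(1) show False
    proof (cases rule: subseq3_cases)
      case 1 then show False using n1 s unfolding has132_def by blast
    next
      case 2
      note o = this
      from o(2) show False
      proof (cases rule: subseq2_cases)
        case 1
        then have "subseq [Suc c,y2,y3] (Suc c#R)" by simp
        moreover have "y3 \<in> set R" using 1 by (meson subseq_singleton_left subseq_Cons')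
        then have "y3 \<noteq> Suc c" using assms(2) by blast
        then have "Suc c < y3" using o s by simp
        ultimately show False using n1 s unfolding has132_def by blast
      next
        case 2
        then show False using o s by simp
      qed
    qed
  qed
  moreover have "\<not> has321 (c#Suc c#R)"
  proof
    assume "has321 (c#Suc c#R)"
    then obtain y1 y2 y3 where s: "subseq [y1,y2,y3] (c#Suc c#R)" "y2<y1" "y3<y2" unfolding has321_def by blast
    from s(1) show False
    proof (cases rule: subseq3_cases)
      case 1 then show False using n2 s unfolding has321_def by blast
    next
      case 2
      note o = this
      from o(2) show False
      proof (cases rule: subseq2_cases)
        case 1
        then have "subseq [Suc c,y2,y3] (Suc c#R)" by simp
        moreover have "y2 < Suc c" using o s by simp
        ultimately show False using n2 s unfolding has321_def by blast
      next
        case 2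
        then show False using o s by simp
      qed
    qed
  qed
  ultimately show ?thesis using avoidsS by blast
qed

fun run_part :: "nat list set \<Rightarrow> nat list \<Rightarrow> nat list \<Rightarrow> nat list \<times> nat list" where
  "run_part T [] st = ([], st)"
| "run_part T (a # inp) st =
     (if avoids_all T (a # st) then run_part T inp (a # st)
      else (case st of [] \<Rightarrow> run_part T inp [a]
                     | b # st' \<Rightarrow> apfst (Cons b) (run_part T (a # inp) st')))"

declare run_part.simps(2)[simp del] stack_run.simps(2)[simp del]

lemma rp_push[simp]: "avoids_all T (a#st) \<Longrightarrow> run_part T (a#inp) st = run_part T inp (a#st)"
  by (simp add: run_part.simps(2))
lemma rp_single[simp]: "\<not> avoids_all T [a] \<Longrightarrow> run_part T (a#inp) [] = run_part T inp [a]"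
  by (simp add: run_part.simps(2))
lemma rp_pop[simp]: "\<not> avoids_all T (a#b#st) \<Longrightarrow> run_part T (a#inp) (b#st) = apfst (Cons b) (run_part T (a#inp) st)"
  by (simp add: run_part.simps(2))
lemma sr_push[simp]: "avoids_all T (a#st) \<Longrightarrow> stack_run T (a#inp) st = stack_run T inp (a#st)"
  by (simp add: stack_run.simps(2))
lemma sr_single[simp]: "\<not> avoids_all T [a] \<Longrightarrow> stack_run T (a#inp) [] = stack_run T inp [a]"
  by (simp add: stack_run.simps(2))
lemma sr_pop[simp]: "\<not> avoids_all T (a#b#st) \<Longrightarrow> stack_run T (a#inp) (b#st) = b # stack_run T (a#inp) st"
  by (simp add: stack_run.simps(2))

lemma run_decomp:
  "stack_run T (p @ rest) st = fst (run_part T p st) @ stack_run T rest (snd (run_part T p st))"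
  proof (induction T p st rule: run_part.induct)
  case (2 T a inp st) then show ?case by (cases st; cases "avoids_all T (a#st)"; auto)
qed simp

lemma mset_run: "mset (stack_run T inp st) = mset inp + mset st"
  proof (induction T inp st rule: stack_run.induct)
  case (2 T a inp st) then show ?case by (cases st; cases "avoids_all T (a#st)"; auto)
qed simp

lemma set_run: "set (stack_run T inp st) = set inp \<union> set st"
  using mset_run by (metis set_mset_mset set_mset_union)

lemma part_set: "set (snd (run_part T p st)) \<subseteq> set p \<union> set st"
  proof (induction T p st rule: run_part.induct)
  case (2 T a inp st) then show ?case by (cases st; cases "avoids_all T (a#st)"; auto)
qed simp

lemma part_distinct: "distinct (p @ st) \<Longrightarrow> distinct (snd (run_part T p st))"
  proof (induction T p st rule: run_part.induct)
  case (2 T a inp st) then show ?case by (cases st; cases "avoids_all T (a#st)"; auto)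
qed simp

lemma avoids_tail: "avoids_all T (b # st) \<Longrightarrow> avoids_all T st"
  unfolding avoids_all_def contains_def using list_emb_Cons by blast

lemma avoidsS_single: "avoids_all S [a]"
proof -
  have "\<not> subseq [y1,y2,y3] [a]" for y1 y2 y3 :: nat using list_emb_length by fastforce
  then show ?thesis unfolding avoidsS has132_def has321_def by blast
qed

lemma part_avoid: "(\<And>a. avoids_all T [a]) \<Longrightarrow> avoids_all T st \<Longrightarrow> avoids_all T (snd (run_part T p st))"
proof (induction T p st rule: run_part.induct)
  case (1 T st)
  then show ?case by simp
next
  case (2 T a inp st)
  then show ?case using avoids_tail by (cases st; cases "avoids_all T (a#st)"; auto)
qed

lemma part_min:
  "T = S \<Longrightarrow> distinct (p @ st) \<Longrightarrow> avoids_all T st \<Longrightarrow> m \<in> set p \<union> set st \<Longrightarrow>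
   \<forall>z\<in>set p \<union> set st. m \<le> z \<Longrightarrow> m \<in> set (snd (run_part T p st))"
proof (induction T p st rule: run_part.induct)
  case (1 T st)
  then show ?case by simp
next
  case (2 T a inp st)
  note TS = 2(4)
  show ?case
  proof (cases "avoids_all T (a # st)")
    case True
    then show ?thesis using 2 by auto
  next
    case F: False
    show ?thesis
    proof (cases st)
      case Nil
      then show ?thesis using 2 F avoidsS_single by auto
    next
      case (Cons b st')
      have mb: "m \<noteq> b"
      proof
        assume mb: "m = b"
        have "avoids_all S (a # m # st')"
        proof (rule K1)
          show "avoids_all S (m # st')" using 2(6) TS Cons mb by simp
          show "\<forall>z\<in>set st'. m < z"
          proof
            fix z assume z: "z \<in> set st'"
            then have "z \<noteq> m" using 2(5) Cons mb by auto
            moreover have "m \<le> z" using 2(8) z Cons by auto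
            ultimately show "m < z" by simp
          qed
          have "a \<noteq> m" using 2(5) Cons mb by auto
          moreover have "m \<le> a" using 2(8) by auto
          ultimately show "m < a" by simp
        qed
        then show False using F Cons mb TS by simp
      qed
      have "m \<in> set (snd (run_part T (a # inp) st'))"
        using 2(3)[OF F Cons] 2(4-8) Cons mb avoids_tail by auto
      then show ?thesis using F Cons by simp
    qed
  qed
qed


lemma part_single: "\<exists>s'. snd (run_part T [e] st) = e # s' \<and> set s' \<subseteq> set st"
proof (induction st)
  case Nil
  then show ?case by (cases "avoids_all T [e]") auto
next
  case (Cons b st)
  then show ?case by (cases "avoids_all T (e # b # st)") auto
qed

lemma Q: "st = s1 @ e # s2 \<Longrightarrow>
  \<exists>u v. stack_run T inp st = u @ e # v \<and> set s1 \<subseteq> set u \<and> set s2 \<subseteq> set v"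
proof (induction T inp st arbitrary: s1 rule: stack_run.induct)
  case (1 T st)
  then show ?case by auto
next
  case (2 T a inp st)
  show ?case
  proof (cases "avoids_all T (a # st)")
    case True
    then obtain u v where "stack_run T inp (a # st) = u @ e # v" "set (a # s1) \<subseteq> set u" "set s2 \<subseteq> set v"
      using 2(1)[OF True, of "a # s1"] 2(4) by auto
    then show ?thesis using True by auto
  next
    case F: False
    have "st \<noteq> []" using 2(4) by simp
    then obtain b st' where stC: "st = b # st'" by (cases st) auto
    show ?thesis
    proof (cases s1)
      case Nil
      then have "b = e" "st' = s2" using stC 2(4) by auto
      then show ?thesis using F stC Nil set_run[of T "a#inp" s2] by (intro exI[of _ "[]"] exI[of _ "stack_run T (a # inp) s2"]) auto
    next
      case (Cons b' s1')
      note Cons1 = this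
      then have "st' = s1' @ e # s2" "b = b'" using stC 2(4) by auto
      then obtain u v where "stack_run T (a # inp) st' = u @ e # v" "set s1' \<subseteq> set u" "set s2 \<subseteq> set v"
        using 2(3)[OF F stC] by blast
      then show ?thesis using F stC Cons1 \<open>b = b'\<close> by (intro exI[of _ "b' # u"] exI[of _ v]) auto
    qed
  qed
qed

lemma W1: "(\<And>st. c \<in> set st \<Longrightarrow> \<not> avoids_all T (e # st)) \<Longrightarrow> inp = p @ e # q \<Longrightarrow>
  c \<in> set st \<union> set p \<Longrightarrow> \<exists>u v. stack_run T inp st = u @ c # v \<and> set u \<subseteq> set st \<union> set p"
proof (induction T inp st arbitrary: p rule: stack_run.induct)
  case (1 T st)
  then show ?case by auto
next
  case (2 T a inp st)
  show ?case
  proof (cases "avoids_all T (a # st)")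
    case True
    then have "p \<noteq> []" using 2(4,5,6) by auto
    then obtain p' where p: "p = a # p'" "inp = p' @ e # q" using 2(5) by (cases p) auto
    then obtain u v where "stack_run T inp (a # st) = u @ c # v" "set u \<subseteq> set (a # st) \<union> set p'"
      using 2(1)[OF True 2(4), of p'] 2(6) by auto
    then show ?thesis using True p by auto
  next
    case F: False
    show ?thesis
    proof (cases st)
      case Nil
      then have "p \<noteq> []" using 2(6) by auto
      then obtain p' where p: "p = a # p'" "inp = p' @ e # q" using 2(5) by (cases p) auto
      then obtain u v where "stack_run T inp [a] = u @ c # v" "set u \<subseteq> set [a] \<union> set p'"
        using 2(2)[OF F Nil 2(4), of p'] 2(6) Nil by auto
      then show ?thesis using F p Nil by auto
    next
      case (Cons b st')
      show ?thesis
      proof (cases "b = c")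
        case True
        then show ?thesis using F Cons by (intro exI[of _ "[]"] exI[of _ "stack_run T (a # inp) st'"]) auto
      next
        case False
        then obtain u v where "stack_run T (a # inp) st' = u @ c # v" "set u \<subseteq> set st' \<union> set p"
          using 2(3)[OF F Cons 2(4,5)] 2(6) Cons by auto
        then show ?thesis using F Cons by (intro exI[of _ "b # u"] exI[of _ v]) auto
      qed
    qed
  qed
qed

lemma avoidsS_nil: "avoids_all S []"
  unfolding avoidsS has132_def has321_def by simp

theorem proposition3p3:
  fixes n :: nat and x :: "nat list"
  assumes "x \<in> Sort n [1, 3, 2] [3, 2, 1]"
  shows "\<not> contains_132star x"
proof
  assume "contains_132star x"
  then obtain a b where ab: "a < b" "b + 1 < length x" "x ! a < x ! (b + 1)" "x ! b = x ! (b + 1) + 1"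
    unfolding contains_132star_def by blast
  have xp: "x \<in> permutations_of_set {1..n}" and ws: "west_s (s_pair [1,3,2] [3,2,1] x) = [1..<n+1]"
    using assms unfolding Sort_def by auto
  have dx: "distinct x" using xp permutations_of_setD by blast
  define c where "c = x ! (b + 1)"
  define pre where "pre = take b x"
  define post where "post = drop (Suc (Suc b)) x"
  have hx: "x = pre @ Suc c # c # post"
  proof -
    have "x = take b x @ drop b x" by simp
    also have "drop b x = x ! b # x ! Suc b # drop (Suc (Suc b)) x"
      using ab(2) by (simp add: Cons_nth_drop_Suc)
    finally show ?thesis using ab(4) unfolding c_def pre_def post_def by simp
  qed
  have dpre: "distinct (pre @ Suc c # c # post)" using dx hx by simp
  have xa: "x ! a \<in> set pre" unfolding pre_def using ab by (auto simp: in_set_conv_nth intro!: exI[of _ a])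
  define m where "m = Min (set pre)"
  have mpre: "m \<in> set pre" using xa unfolding m_def by (intro Min_in) auto
  have mle: "\<forall>z\<in>set pre. m \<le> z" unfolding m_def by simp
  have mc: "m < c" using mle xa ab(3) unfolding c_def by fastforce
  define st1 where "st1 = snd (run_part S pre [])"
  define out1 where "out1 = fst (run_part S pre [])"
  have m1: "m \<in> set st1" unfolding st1_def
    using part_min[of S pre "[]" m] dpre avoidsS_nil mpre mle by auto
  have a1: "avoids_all S st1" unfolding st1_def using part_avoid avoidsS_single avoidsS_nil by blast
  have s1: "set st1 \<subseteq> set pre" unfolding st1_def using part_set by fastforce
  have d1: "distinct st1" unfolding st1_def using part_distinct dpre by fastforce
  define st2 where "st2 = snd (run_part S [Suc c] st1)"
  define out2 where "out2 = fst (run_part S [Suc c] st1)"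
  have dd: "distinct ([Suc c] @ st1)" using d1 s1 dpre by auto
  have m2: "m \<in> set st2" unfolding st2_def
    using part_min[of S "[Suc c]" st1 m] dd a1 m1 mle s1 mc by auto
  obtain s' where st2: "st2 = Suc c # s'" "set s' \<subseteq> set st1"
    unfolding st2_def using part_single by blast
  have a2: "avoids_all S st2" unfolding st2_def using part_avoid avoidsS_single a1 by blast
  have d2: "distinct st2" unfolding st2_def using part_distinct dd by blast
  have ms': "m \<in> set s'" using m2 st2 mc by auto
  have a3: "avoids_all S (c # Suc c # s')" using K2 a2 d2 st2 by simp
  define y where "y = s_pair [1,3,2] [3,2,1] x"
  have "y = stack_run S x []" unfolding y_def s_pair_def s_T_def by simp
  also have "\<dots> = out1 @ stack_run S (Suc c # c # post) st1"
    unfolding hx out1_def st1_def by (rule run_decomp)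
  also have "stack_run S (Suc c # c # post) st1 = out2 @ stack_run S (c # post) st2"
    unfolding out2_def st2_def using run_decomp[of S "[Suc c]" "c # post" st1] by simp
  also have "stack_run S (c # post) st2 = stack_run S post (c # Suc c # s')"
    using a3 st2 by simp
  finally have y1: "y = out1 @ out2 @ stack_run S post ([c] @ Suc c # s')" by simp
  obtain u v where uv: "stack_run S post ([c] @ Suc c # s') = u @ Suc c # v" "set [c] \<subseteq> set u" "set s' \<subseteq> set v"
    using Q by blast
  have y2: "y = (out1 @ out2 @ u) @ Suc c # v" using y1 uv by simp
  have "mset y = mset x" unfolding y_def s_pair_def s_T_def using mset_run by simp
  then have dy: "distinct y" using dx mset_eq_imp_distinct_iff by blast
  have mv: "m \<in> set v" using uv ms' by auto
  have mnp: "m \<notin> set (out1 @ out2 @ u)" using dy y2 mv by auto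
  have cp: "c \<in> set (out1 @ out2 @ u)" using uv by auto
  obtain u' v' where w: "west_s y = u' @ c # v'" "set u' \<subseteq> set [] \<union> set (out1 @ out2 @ u)"
    unfolding west_s_def s_T_def
    using W1[of c "{[2,1]}" "Suc c" y "out1 @ out2 @ u" v "[]"] west_blocked y2 cp by auto
  have "m \<in> set (west_s y)" unfolding west_s_def s_T_def using set_run y2 mv by auto
  then have "m \<in> set v'" using w mnp mc by auto
  moreover have "sorted_wrt (<) (u' @ c # v')" by (metis w(1) ws y_def sorted_wrt_upt)
  ultimately have "c < m" by (auto simp: sorted_wrt_append)
  then show False using mc by simp
qed

end
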